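(* Let $\lambda=(\lambda_1,\dots,\lambda_l)$ be a partition of length $l$, $(w_l,\dots,w_1)=(\lambda_1,\dots,\lambda_l)+(l-1,\dots,1,0)$, and $N'_{\lambda,1}=\sum_{i=2}^l\lambda_i-l+1$. (i) If $m<N'_{\lambda,1}$ then $\partial_1^m s_\lambda([x_1]-[x_2])=0$. (ii) $\partial_1^{N'_{\lambda,1}}s_\lambda([x_1]-[x_2])=c_\lambda\,s_{(\lambda_1,1^{l-1})}([x_1]-[x_2])$, where $c_\lambda=\dfrac{N'_{\lambda,1}!}{\prod_{i=1}^{l-1}(w_i-1)!}\prod_{1\le i<j\le l-1}(w_j-w_i)$. (iii) If $\mu=(\mu_1,\dots,\mu_{l'})$ is a partition of length $l'\ge l$ with $\mu_i=\lambda_i$ for $2\le i\le l$ and $\mu_i=1$ for $i>l$, then $\partial_1^{N'_{\lambda,1}}s_\mu([x_1]-[x_2])=c_\lambda\,s_{(\mu_1,1^{l'-1})}([x_1]-[x_2])$. (iv) For $m,r\ge1$, $s_{(m,1^{r-1})}([x_1]-[x_2])=(-1)^{r-1}x_1^{m-1}x_2^{r-1}(x_1-x_2)$.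
   Context: For $t=(t_1,t_2,\dots)$ define $p_m(t)$ by $\exp(\sum_{m\ge1}t_mk^m)=\sum_{m\ge0}p_m(t)k^m$, $p_m=0$ for $m<0$; $s_\mu(t)=\det(p_{\mu_i-i+j}(t))_{1\le i,j\le l}$ for a partition $\mu=(\mu_1\ge\dots\ge\mu_l)$. $[x]=(x,x^2/2,x^3/3,\dots)$, so $[x_1]-[x_2]$ has components $(x_1^i-x_2^i)/i$. $\partial_1=\partial/\partial t_1$. $(m,1^{r-1})$ denotes the hook partition $(m,1,\dots,1)$ with $r-1$ ones. *)

theory Defs
  imports "HOL-Analysis.Derivative" "HOL-Computational_Algebra.Formal_Power_Series" "Jordan_Normal_Form.Determinant"
begin

text \<open>Times t = (t_1, t_2, ...) are functions nat => real; the value at index 0 is ignored.\<close>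

definition pfun :: "(nat \<Rightarrow> real) \<Rightarrow> nat \<Rightarrow> real" where
  "pfun t m = fps_nth (fps_exp 1 oo Abs_fps (\<lambda>i. if i = 0 then 0 else t i)) m"

definition pint :: "(nat \<Rightarrow> real) \<Rightarrow> int \<Rightarrow> real" where
  "pint t k = (if k < 0 then 0 else pfun t (nat k))"

definition schur :: "nat list \<Rightarrow> (nat \<Rightarrow> real) \<Rightarrow> real" where
  "schur mu t = det (mat (length mu) (length mu)
      (\<lambda>(i, j). pint t (int (mu ! i) - int i + int j)))"

definition is_partition :: "nat list \<Rightarrow> bool" where
  "is_partition mu \<longleftrightarrow> sorted_wrt (\<ge>) mu \<and> (\<forall>x\<in>set mu. 0 < x)"

text \<open>[x1] - [x2]: components (x1^i - x2^i)/i.\<close>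
definition brk :: "real \<Rightarrow> real \<Rightarrow> nat \<Rightarrow> real" where
  "brk x1 x2 = (\<lambda>i. if i = 0 then 0 else (x1 ^ i - x2 ^ i) / real i)"

definition d1 :: "nat \<Rightarrow> ((nat \<Rightarrow> real) \<Rightarrow> real) \<Rightarrow> (nat \<Rightarrow> real) \<Rightarrow> real" where
  "d1 m F t = (deriv ^^ m) (\<lambda>s. F (t(1 := s))) (t 1)"

definition hook :: "nat \<Rightarrow> nat \<Rightarrow> nat list" where
  "hook m r = m # replicate (r - 1) 1"

text \<open>N'_{lambda,1} = sum_{i=2}^l lambda_i - l + 1 (nonnegative for partitions).\<close>
definition Nprime :: "nat list \<Rightarrow> nat" where
  "Nprime lam = (\<Sum>i\<in>{1..<length lam}. lam ! i) - (length lam - 1)"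

text \<open>(w_l,...,w_1) = (lambda_1+l-1, ..., lambda_l), i.e. w_i = lambda_{l+1-i} + i - 1, 1 <= i <= l.\<close>
definition wt :: "nat list \<Rightarrow> nat \<Rightarrow> nat" where
  "wt lam i = lam ! (length lam - i) + i - 1"

definition clam :: "nat list \<Rightarrow> real" where
  "clam lam = fact (Nprime lam) / (\<Prod>i\<in>{1..length lam - 1}. fact (wt lam i - 1))
     * (\<Prod>i\<in>{1..length lam - 1}. \<Prod>j\<in>{i<..length lam - 1}. (real (wt lam j) - real (wt lam i)))"

end

theory Submission
  imports Defs
begin



definition qq :: "real \<Rightarrow> real \<Rightarrow> nat \<Rightarrow> real" where
  "qq x1 x2 n = (if n = 0 then 1 else x1^(n-1)*(x1-x2))"

lemma fps_ode_unique:
  fixes f h g :: "real fps"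
  assumes "fps_deriv f = f * g" "fps_deriv h = h * g" "fps_nth f 0 = fps_nth h 0"
  shows "f = h"
proof -
  have "\<forall>k\<le>n. fps_nth f k = fps_nth h k" for n
  proof (induction n)
    case 0 then show ?case using assms(3) by simp
  next
    case (Suc n)
    have "fps_nth (fps_deriv f) n = fps_nth (fps_deriv h) n"
      unfolding assms(1,2) fps_mult_nth using Suc.IH by (intro sum.cong) auto
    hence "of_nat (n+1) * fps_nth f (n+1) = of_nat (n+1) * fps_nth h (n+1)" by simp
    hence "fps_nth f (Suc n) = fps_nth h (Suc n)" by simp
    with Suc.IH show ?case using le_Suc_eq by auto
  qed
  thus ?thesis by (auto simp: fps_eq_iff)
qed

lemma geo_fps: "Abs_fps (\<lambda>i. (a::real)^i) * (1 - fps_const a * fps_X) = 1"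
proof -
  have "fps_nth (Abs_fps (\<lambda>i. a^i) * (1 - fps_const a * fps_X)) n = fps_nth (1::real fps) n" for n
    by (cases n) (auto simp: algebra_simps fps_X_mult_right_nth)
  thus ?thesis by (simp add: fps_eq_iff)
qed

lemma pfun_formula:
  "pfun ((brk x1 x2)(1:=s)) n = (\<Sum>j=0..n. (s-(x1-x2))^j / fact j * qq x1 x2 (n-j))"
proof -
  define u where "u = s - (x1 - x2)"
  define G where "G = Abs_fps (\<lambda>i. if i=0 then 0 else ((brk x1 x2)(1:=s)) i)"
  define K where "K = Abs_fps (\<lambda>i. x1^(i+1) - x2^(i+1))"
  define H where "H = Abs_fps (qq x1 x2)"
  define D where "D = (1 - fps_const x1 * fps_X :: real fps)"
  define E where "E = (1 - fps_const x2 * fps_X :: real fps)"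
  define P where "P = fps_exp 1 oo G"
  define Q where "Q = fps_exp u * H"
  have G0: "fps_nth G 0 = 0" by (simp add: G_def)
  have dG: "fps_deriv G = fps_const u + K"
  proof -
    have "fps_nth (fps_deriv G) n = fps_nth (fps_const u + K) n" for n
      by (cases n) (auto simp: G_def K_def brk_def u_def field_simps)
    thus ?thesis by (simp add: fps_eq_iff)
  qed
  have dP: "fps_deriv P = P * fps_deriv G"
    unfolding P_def by (simp add: fps_compose_deriv[OF G0])
  have K_eq: "K = fps_const x1 * Abs_fps (\<lambda>i. x1^i) - fps_const x2 * Abs_fps (\<lambda>i. x2^i)"
    by (simp add: K_def fps_eq_iff)
  have KDE: "K * D * E = fps_const x1 * E - fps_const x2 * D"
  proof -
    have "K * D * E = fps_const x1 * (Abs_fps (\<lambda>i. x1^i) * D) * E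
       - fps_const x2 * (Abs_fps (\<lambda>i. x2^i) * E) * D"
      unfolding K_eq by (simp add: algebra_simps)
    also have "\<dots> = fps_const x1 * E - fps_const x2 * D"
      unfolding D_def E_def geo_fps by simp
    finally show ?thesis .
  qed
  have HD: "H * D = E"
  proof -
    have "fps_nth (H * D) n = fps_nth E n" for n
    proof (cases n)
      case 0 then show ?thesis by (simp add: H_def D_def E_def qq_def algebra_simps)
    next
      case (Suc m) then show ?thesis
        by (cases m) (auto simp: H_def D_def E_def qq_def algebra_simps fps_X_mult_right_nth)
    qed
    thus ?thesis by (simp add: fps_eq_iff)
  qed
  have dHD: "fps_deriv H * D = fps_const x1 * H - fps_const x2"
  proof -
    have "fps_deriv (H * D) = fps_deriv E" by (simp add: HD)
    thus ?thesis by (simp add: D_def E_def algebra_simps del: fps_const_neg add: fps_const_neg[symmetric])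
  qed
  have DE: "D * E \<noteq> 0"
  proof -
    have "fps_nth (D * E) 0 = 1" by (simp add: D_def E_def)
    thus ?thesis by auto
  qed
  have dH: "fps_deriv H = H * K"
  proof -
    have "fps_deriv H * (D * E) = H * K * (D * E)"
    proof -
      have "fps_deriv H * (D * E) = (fps_const x1 * H - fps_const x2) * E"
        using dHD by (metis mult.assoc)
      also have "\<dots> = fps_const x1 * H * E - fps_const x2 * (H * D)"
        unfolding HD by (simp add: algebra_simps)
      also have "\<dots> = H * (fps_const x1 * E - fps_const x2 * D)"
        by (simp add: algebra_simps)
      also have "\<dots> = H * (K * D * E)"
        by (simp only: KDE)
      finally show ?thesis by (simp add: algebra_simps)
    qed
    thus ?thesis using DE by simp
  qed
  have dQ: "fps_deriv Q = Q * fps_deriv G"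
    unfolding Q_def dG by (simp add: dH algebra_simps)
  have PQ: "P = Q"
    by (rule fps_ode_unique[OF dP dQ]) (simp add: P_def Q_def H_def qq_def G_def)
  have "pfun ((brk x1 x2)(1:=s)) n = fps_nth P n"
    by (simp only: pfun_def P_def G_def)
  also have "\<dots> = fps_nth Q n" by (simp add: PQ)
  also have "\<dots> = (\<Sum>j=0..n. (s-(x1-x2))^j / fact j * qq x1 x2 (n-j))"
    by (simp add: Q_def fps_mult_nth H_def u_def)
  finally show ?thesis .
qed



lemma det_colop:
  fixes A B :: "'a::comm_ring_1 mat"
  assumes A: "A \<in> carrier_mat n n" and B: "B \<in> carrier_mat n n"
    and h0: "\<And>i. i < n \<Longrightarrow> B $$ (i,0) = A $$ (i,0)"
    and hj: "\<And>i j. i < n \<Longrightarrow> 0 < j \<Longrightarrow> j < n \<Longrightarrow> B $$ (i,j) = A $$ (i,j) - c * A $$ (i,j-1)"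
  shows "det A = det B"
proof -
  define U where "U = mat n n (\<lambda>(t,j). if t \<le> j then c^(j-t) else 0)"
  have U: "U \<in> carrier_mat n n" by (simp add: U_def)
  have sumeq: "(\<Sum>t=0..j. B $$ (i,t) * c^(j-t)) = A $$ (i,j)" if i: "i < n" and "j < n" for i j
    using \<open>j < n\<close>
  proof (induction j)
    case 0 then show ?case using h0[OF i] by simp
  next
    case (Suc j)
    have "(\<Sum>t=0..Suc j. B $$ (i,t) * c^(Suc j-t)) = B $$ (i, Suc j) + c * (\<Sum>t=0..j. B $$ (i,t) * c^(j-t))"
      by (simp add: sum_distrib_left Suc_diff_le mult.left_commute)
    also have "\<dots> = A $$ (i, Suc j)"
      using Suc hj[OF i, of "Suc j"] by simp
    finally show ?case .
  qed
  have AU: "A = B * U"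
  proof (rule eq_matI)
    fix i j assume i: "i < dim_row (B * U)" and j: "j < dim_col (B * U)"
    hence i': "i < n" and j': "j < n" using B U by auto
    have "(B * U) $$ (i,j) = (\<Sum>t\<in>{0..<n}. B $$ (i,t) * U $$ (t,j))"
      using i' j' B U by (simp add: scalar_prod_def)
    also have "\<dots> = (\<Sum>t\<in>{0..j}. B $$ (i,t) * c^(j-t))"
      using j' by (intro sum.mono_neutral_cong_right) (auto simp: U_def)
    also have "\<dots> = A $$ (i,j)" using sumeq[OF i' j'] .
    finally show "A $$ (i,j) = (B * U) $$ (i,j)" by simp
  qed (use A B U in auto)
  have "det U = 1"
  proof -
    have "det U = prod_list (diag_mat U)"
      by (rule det_upper_triangular[OF _ U]) (auto simp: U_def upper_triangular_def)
    also have "\<dots> = 1" by (simp add: prod_list_diag_prod U_def)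
    finally show ?thesis .
  qed
  thus ?thesis using AU det_mult[OF B U] by simp
qed

lemma prod_coeff_low:
  fixes f :: "'i \<Rightarrow> 'a::comm_semiring_1 poly"
  assumes "finite A" and "\<And>i n. i \<in> A \<Longrightarrow> n < b i \<Longrightarrow> coeff (f i) n = 0"
  shows "(\<forall>n < sum b A. coeff (prod f A) n = 0) \<and> coeff (prod f A) (sum b A) = (\<Prod>i\<in>A. coeff (f i) (b i))"
  using assms
proof (induction A rule: finite_induct)
  case empty then show ?case by simp
next
  case (insert x F)
  have IH1: "\<And>n. n < sum b F \<Longrightarrow> coeff (prod f F) n = 0"
   and IH2: "coeff (prod f F) (sum b F) = (\<Prod>i\<in>F. coeff (f i) (b i))" using insert by auto
  have fx: "\<And>n. n < b x \<Longrightarrow> coeff (f x) n = 0" using insert by auto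
  have low: "coeff (f x * prod f F) n = 0" if "n < b x + sum b F" for n
    unfolding coeff_mult
  proof (rule sum.neutral, intro ballI)
    fix i assume "i \<in> {..n}"
    show "coeff (f x) i * coeff (prod f F) (n - i) = 0"
    proof (cases "i < b x")
      case True then show ?thesis using fx by simp
    next
      case False then have "n - i < sum b F" using that \<open>i \<in> {..n}\<close> by auto
      then show ?thesis using IH1 by simp
    qed
  qed
  have "coeff (f x * prod f F) (b x + sum b F) = (\<Sum>i\<le>b x + sum b F. if i = b x then coeff (f x) (b x) * coeff (prod f F) (sum b F) else 0)"
    unfolding coeff_mult
  proof (intro sum.cong refl)
    fix i assume "i \<in> {..b x + sum b F}"
    show "coeff (f x) i * coeff (prod f F) (b x + sum b F - i) = (if i = b x then coeff (f x) (b x) * coeff (prod f F) (sum b F) else 0)"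
    proof (cases "i < b x")
      case True then show ?thesis using fx by simp
    next
      case False
      moreover have "i \<le> b x + sum b F" using \<open>i \<in> {..b x + sum b F}\<close> by simp
      ultimately show ?thesis using IH1[of "b x + sum b F - i"] by (cases "i = b x") auto
    qed
  qed
  also have "\<dots> = coeff (f x) (b x) * coeff (prod f F) (sum b F)" by simp
  finally show ?case using insert low IH2 by simp
qed





definition pP :: "real \<Rightarrow> real \<Rightarrow> int \<Rightarrow> real poly" where
  "pP x1 x2 n = (if n < 0 then 0 else (\<Sum>j=0..nat n. monom (qq x1 x2 (nat n - j) / fact j) j))"

definition rP :: "real \<Rightarrow> int \<Rightarrow> real poly" where
  "rP x2 n = (if n < 0 then 0 else monom (1 / fact (nat n)) (nat n)
      - (if n \<ge> 1 then monom (x2 / fact (nat n - 1)) (nat n - 1) else 0))"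

lemma coeff_pP: "coeff (pP x1 x2 n) k = (if 0 \<le> n \<and> k \<le> nat n then qq x1 x2 (nat n - k) / fact k else 0)"
proof (cases "n < 0")
  case True then show ?thesis by (simp add: pP_def)
next
  case False
  have "coeff (pP x1 x2 n) k = (\<Sum>j=0..nat n. if k = j then qq x1 x2 (nat n - j) / fact j else 0)"
    using False by (simp add: pP_def coeff_sum coeff_monom)
  also have "\<dots> = (if k \<le> nat n then qq x1 x2 (nat n - k) / fact k else 0)"
    by (simp add: sum.delta)
  finally show ?thesis using False by simp
qed

lemma coeff_rP: "coeff (rP x2 n) k = (if 0 \<le> n \<and> k = nat n then 1 / fact k else 0)
   - (if 1 \<le> n \<and> k + 1 = nat n then x2 / fact k else 0)"
  by (auto simp: rP_def coeff_monom)

lemma pP_rec: "pP x1 x2 n = rP x2 n + [:x1:] * pP x1 x2 (n - 1)"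
proof (rule poly_eqI)
  fix k
  show "coeff (pP x1 x2 n) k = coeff (rP x2 n + [:x1:] * pP x1 x2 (n - 1)) k"
  proof (cases "n < 0")
    case True then show ?thesis by (simp add: coeff_pP coeff_rP)
  next
    case False
    then obtain a where a: "n = int a" by (metis nat_0_le not_less)
    show ?thesis
    proof (cases "a = 0")
      case True then show ?thesis using a by (simp add: coeff_pP coeff_rP qq_def)
    next
      case False
      then obtain b where b: "a = Suc b" by (cases a) auto
      have n1: "n - 1 = int b" using a b by simp
      consider "k > a" | "k = a" | "k = b" | "k < b" using b by linarith
      then show ?thesis
      proof cases
        case 1 then show ?thesis using a b n1 by (simp add: coeff_pP coeff_rP)
      next
        case 2 then show ?thesis using a b n1 by (simp add: coeff_pP coeff_rP qq_def del: fact_Suc)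
      next
        case 3
        show ?thesis unfolding a b 3 by (simp add: coeff_pP coeff_rP qq_def diff_divide_distrib)
      next
        case 4
        from less_imp_Suc_add[OF 4] obtain d where d: "b = Suc (k + d)" by blast
        have e1: "nat n = k + Suc (Suc d)" "n - 1 = int (k + Suc d)" using a b d by auto
        have n0: "0 \<le> n" "1 \<le> n" using a b by auto
        have "coeff (pP x1 x2 n) k = qq x1 x2 (Suc (Suc d)) / fact k"
          unfolding coeff_pP using e1(1) n0 by simp
        moreover have "coeff (rP x2 n) k = 0" unfolding coeff_rP using e1(1) by simp
        moreover have "coeff (pP x1 x2 (n - 1)) k = qq x1 x2 (Suc d) / fact k"
          unfolding coeff_pP e1(2) nat_int by simp
        ultimately show ?thesis by (simp add: qq_def)
      qed
    qed
  qed
qed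



declare One_nat_def[simp del]


lemma poly_pP: "poly (pP x1 x2 n) (s - (x1 - x2)) = pint ((brk x1 x2)(1:=s)) n"
proof (cases "n < 0")
  case True then show ?thesis by (simp add: pP_def pint_def)
next
  case False
  then show ?thesis
    by (simp add: pP_def pint_def poly_sum poly_monom pfun_formula mult.commute)
qed

definition Mp :: "real \<Rightarrow> real \<Rightarrow> nat list \<Rightarrow> real poly mat" where
  "Mp x1 x2 lam = mat (length lam) (length lam) (\<lambda>(i,j). pP x1 x2 (int (lam!i) - int i + int j))"

definition Dp :: "real \<Rightarrow> real \<Rightarrow> nat list \<Rightarrow> real poly" where
  "Dp x1 x2 lam = det (Mp x1 x2 lam)"

lemma schur_poly: "schur lam ((brk x1 x2)(1:=s)) = poly (Dp x1 x2 lam) (s - (x1 - x2))"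
proof -
  define u where "u = s - (x1 - x2)"
  interpret h: comm_ring_hom "\<lambda>p::real poly. poly p u"
    by unfold_locales (auto simp: poly_mult)
  have "schur lam ((brk x1 x2)(1:=s)) = det (map_mat (\<lambda>p. poly p u) (Mp x1 x2 lam))"
    unfolding schur_def Mp_def u_def
    by (intro arg_cong[where f=det] eq_matI) (auto simp: poly_pP)
  also have "\<dots> = poly (Dp x1 x2 lam) u" unfolding Dp_def by (rule h.hom_det)
  finally show ?thesis by (simp add: u_def)
qed

lemma brk_upd: "brk x1 x2 = (brk x1 x2)(1 := x1 - x2)"
  by (rule ext) (simp add: brk_def)

lemma schur_brk: "schur lam (brk x1 x2) = coeff (Dp x1 x2 lam) 0"
  by (subst brk_upd) (simp add: schur_poly poly_0_coeff_0)

lemma deriv_poly_shift: "deriv (\<lambda>s. poly p (s - c)) = (\<lambda>s. poly (pderiv p) (s - (c::real)))"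
proof
  fix s
  have "((\<lambda>s. poly p (s - c)) has_field_derivative poly (pderiv p) (s - c) * 1) (at s)"
    by (rule DERIV_chain2[OF poly_DERIV]) (auto intro!: derivative_eq_intros)
  thus "deriv (\<lambda>s. poly p (s - c)) s = poly (pderiv p) (s - c)"
    by (simp add: DERIV_imp_deriv)
qed

lemma deriv_iter_poly: "(deriv ^^ m) (\<lambda>s. poly p (s - c)) = (\<lambda>s. poly ((pderiv ^^ m) p) (s - (c::real)))"
  by (induction m) (simp_all add: deriv_poly_shift)

lemma d1_Dp: "d1 m (schur lam) (brk x1 x2) = fact m * coeff (Dp x1 x2 lam) m"
proof -
  have "(\<lambda>s. schur lam ((brk x1 x2)(1 := s))) = (\<lambda>s. poly (Dp x1 x2 lam) (s - (x1 - x2)))"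
    by (simp add: schur_poly)
  moreover have "brk x1 x2 1 = x1 - x2" by (simp add: brk_def)
  ultimately have "d1 m (schur lam) (brk x1 x2) = poly ((pderiv ^^ m) (Dp x1 x2 lam)) 0"
    by (simp add: d1_def deriv_iter_poly)
  also have "\<dots> = fact m * coeff (Dp x1 x2 lam) m"
    by (simp add: poly_0_coeff_0 coeff_higher_pderiv pochhammer_fact)
  finally show ?thesis .
qed


declare One_nat_def[simp]



definition gg :: "int \<Rightarrow> real" where "gg z = (if z \<ge> 0 then 1 / fact (nat z) else 0)"

definition Gm :: "nat list \<Rightarrow> real mat" where
  "Gm lam = mat (length lam - 1) (length lam - 1) (\<lambda>(i,j). gg (int (lam!(Suc i)) - 1 - int i + int j))"

lemma coeff_rP_low: "int t < k - 1 \<Longrightarrow> coeff (rP x2 k) t = 0"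
  by (auto simp: coeff_rP split: if_splits)

lemma coeff_rP_at: "1 \<le> k \<Longrightarrow> coeff (rP x2 k) (nat (k-1)) = - (x2 / fact (nat (k-1)))"
  by (auto simp: coeff_rP)

lemma prod_monom_one: "finite A \<Longrightarrow> (\<Prod>i\<in>A. monom (1::'a::comm_semiring_1) (f i)) = monom 1 (sum f A)"
  by (induction A rule: finite_induct) (auto simp: mult_monom)

lemma coeff_signof: "coeff (signof s * p) n = signof s * coeff p n"
  by (cases s rule: sign_cases) auto

lemma partition_pos: "is_partition lam \<Longrightarrow> i < length lam \<Longrightarrow> 1 \<le> lam!i"
  unfolding is_partition_def using nth_mem[of i lam] by (auto simp: Suc_le_eq One_nat_def)

lemma partition_dec: "is_partition lam \<Longrightarrow> i \<le> j \<Longrightarrow> j < length lam \<Longrightarrow> lam!j \<le> lam!i"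
  unfolding is_partition_def
  by (metis le_eq_less_or_eq order.refl sorted_wrt_nth_less)


lemma main_coeff:
  assumes part: "is_partition lam" and l1: "length lam \<ge> 1"
  shows "(\<forall>n < Nprime lam. coeff (Dp x1 x2 lam) n = 0) \<and>
    coeff (Dp x1 x2 lam) (Nprime lam) = qq x1 x2 (lam!0) * (-x2)^(length lam - 1) * det (Gm lam)"
proof -
  define l where "l = length lam"
  have l1': "0 < l" using l1 by (simp add: l_def Suc_le_eq)
  have pos: "\<And>i. i < l \<Longrightarrow> 1 \<le> lam!i" using partition_pos[OF part] by (simp add: l_def)
  have dec: "\<And>i j. i \<le> j \<Longrightarrow> j < l \<Longrightarrow> lam!j \<le> lam!i" using partition_dec[OF part] by (simp add: l_def)
  define m where "m = (\<lambda>i. int (lam!i) - int i)"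
  define Mr where "Mr = mat l l (\<lambda>(i,j). if j = 0 then pP x1 x2 (m i) else rP x2 (m i + int j))"
  have Mr: "Mr \<in> carrier_mat l l" by (simp add: Mr_def)
  have DMr: "Dp x1 x2 lam = det Mr"
    unfolding Dp_def
  proof (rule det_colop[where c = "[:x1:]"])
    show "Mp x1 x2 lam \<in> carrier_mat l l" by (simp add: Mp_def l_def)
    show "Mr \<in> carrier_mat l l" by (rule Mr)
    fix i assume "i < l"
    then show "Mr $$ (i, 0) = Mp x1 x2 lam $$ (i, 0)" using l1' by (simp add: Mr_def Mp_def m_def l_def)
  next
    fix i j assume i: "i < l" and j: "0 < j" "j < l"
    have e: "int (lam ! i) - int i + int (j - 1) = (int (lam ! i) - int i + int j) - 1" using j by simp
    show "Mr $$ (i, j) = Mp x1 x2 lam $$ (i, j) - [:x1:] * Mp x1 x2 lam $$ (i, j - 1)"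
      using i j by (simp add: Mr_def Mp_def m_def l_def e pP_rec[of x1 x2 "int (lam ! i) - int i + int j"] add_diff_eq)
  qed
  define E where "E = (\<lambda>i j. monom 1 i * Mr $$ (i,j))"
  define b where "b = (\<lambda>i j. if j = 0 then i else lam!i + j - 1)"
  define L where "L = (\<Sum>i=0..<l. i)"
  define P where "P = {p. p permutes {0..<l}}"
  have finP: "finite P" unfolding P_def by (simp add: finite_permutations)
  have expand: "monom 1 L * det Mr = (\<Sum>\<sigma>\<in>P. signof \<sigma> * (\<Prod>i=0..<l. E i (\<sigma> i)))"
  proof -
    have "monom 1 L * det Mr = (\<Sum>\<sigma>\<in>P. signof \<sigma> * (monom 1 L * (\<Prod>i=0..<l. Mr $$ (i, \<sigma> i))))"
      unfolding det_def'[OF Mr] P_def by (simp add: sum_distrib_left algebra_simps)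
    also have "\<dots> = (\<Sum>\<sigma>\<in>P. signof \<sigma> * (\<Prod>i=0..<l. E i (\<sigma> i)))"
      by (simp add: E_def prod.distrib prod_monom_one L_def)
    finally show ?thesis .
  qed
  have vanish: "coeff (E i j) n = 0" if ij: "i < l" "j < l" and n: "n < b i j" for i j n
  proof (cases "j = 0")
    case True then show ?thesis using ij n by (simp add: E_def b_def coeff_monom_mult)
  next
    case j0: False
    show ?thesis
    proof (cases "n < i")
      case True then show ?thesis by (simp add: E_def coeff_monom_mult)
    next
      case False
      have "int (n - i) < m i + int j - 1" using n j0 False pos[OF ij(1)] by (simp add: b_def m_def)
      then show ?thesis using ij j0 False by (simp add: E_def Mr_def coeff_monom_mult coeff_rP_low)
    qed
  qed
  define T where "T = (\<lambda>\<sigma>. \<Sum>i=0..<l. b i (\<sigma> i))"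
  have Tform: "int (T \<sigma>) = (\<Sum>i=0..<l. int (lam!i) - 1) + (\<Sum>i=0..<l. int i) + (int k - int (lam!k) + 1)"
    if s: "\<sigma> \<in> P" and k: "k < l" "\<sigma> k = 0" for \<sigma> k
  proof -
    have sp: "\<sigma> permutes {0..<l}" using s by (simp add: P_def)
    have bi: "int (b i (\<sigma> i)) = (int (lam!i) - 1) + int (\<sigma> i) + (if i = k then int k - int (lam!k) + 1 else 0)"
      if i: "i \<in> {0..<l}" for i
    proof -
      have "\<sigma> i = 0 \<longleftrightarrow> i = k"
        using permutes_inj[OF sp] k by (metis injD)
      thus ?thesis using pos[of i] i by (auto simp: b_def)
    qed
    have "int (T \<sigma>) = (\<Sum>i=0..<l. (int (lam!i) - 1) + int (\<sigma> i) + (if i = k then int k - int (lam!k) + 1 else 0))"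
      unfolding T_def of_nat_sum using bi by (intro sum.cong) auto
    also have "\<dots> = (\<Sum>i=0..<l. int (lam!i) - 1) + (\<Sum>i=0..<l. int (\<sigma> i)) + (int k - int (lam!k) + 1)"
      using k by (simp add: sum.distrib)
    also have "(\<Sum>i=0..<l. int (\<sigma> i)) = (\<Sum>i=0..<l. int i)"
      using sum.permute[OF sp, of int] by (simp add: comp_def)
    finally show ?thesis .
  qed
  have idP: "id \<in> P" by (simp add: P_def permutes_id)
  have Tid: "int (T id) = (\<Sum>i=0..<l. int (lam!i) - 1) + (\<Sum>i=0..<l. int i) + (1 - int (lam!0))"
    using Tform[OF idP, of 0] l1' by simp
  have kex: "\<exists>k. k < l \<and> \<sigma> k = 0" if "\<sigma> \<in> P" for \<sigma>
  proof -
    have sp: "\<sigma> permutes {0..<l}" using that by (simp add: P_def)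
    have "0 \<in> \<sigma> ` {0..<l}" using permutes_image[OF sp] l1' by simp
    thus ?thesis by auto
  qed
  have Tge: "T id \<le> T \<sigma>" and Tgt: "\<sigma> 0 \<noteq> 0 \<Longrightarrow> T id < T \<sigma>" if s: "\<sigma> \<in> P" for \<sigma>
  proof -
    obtain k where k: "k < l" "\<sigma> k = 0" using kex[OF s] by blast
    have d: "lam!k \<le> lam!0" using dec[of 0 k] k by simp
    have "int (T \<sigma>) - int (T id) = int k + int (lam!0) - int (lam!k)"
      using Tform[OF s k] Tid by simp
    then show "T id \<le> T \<sigma>" using d by linarith
    assume "\<sigma> 0 \<noteq> 0"
    hence "k \<noteq> 0" using k by (metis)
    with \<open>int (T \<sigma>) - int (T id) = _\<close> d show "T id < T \<sigma>" by linarith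
  qed
  have Teq: "T \<sigma> = T id" if s: "\<sigma> \<in> P" "\<sigma> 0 = 0" for \<sigma>
    using Tform[OF s(1), of 0] Tid l1' s(2) by simp
  have NL: "T id = Nprime lam + L"
  proof -
    have s1: "(\<Sum>i=0..<l. int (lam!i) - 1) = (int (lam!0) - 1) + (\<Sum>i=1..<l. int (lam!i) - 1)"
      using l1' by (simp add: sum.atLeast_Suc_lessThan)
    have s2: "(\<Sum>i=1..<l. int (lam!i) - 1) = int (\<Sum>i=1..<l. lam!i) - int (l - 1)"
      by (simp add: sum_subtractf of_nat_sum)
    have s3: "l - 1 \<le> (\<Sum>i=1..<l. lam!i)"
    proof -
      have "(\<Sum>i=1..<l. (1::nat)) \<le> (\<Sum>i=1..<l. lam!i)"
        by (rule sum_mono) (use pos in auto)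
      thus ?thesis by simp
    qed
    have "int (Nprime lam) = int (\<Sum>i=1..<l. lam!i) - int (l - 1)"
      using s3 by (simp add: Nprime_def l_def of_nat_diff)
    moreover have "int L = (\<Sum>i=0..<l. int i)" by (simp add: L_def of_nat_sum)
    ultimately have "int (T id) = int (Nprime lam + L)"
      using Tid s1 s2 by simp
    thus ?thesis by linarith
  qed
  have prodc: "(\<forall>n < T \<sigma>. coeff (\<Prod>i=0..<l. E i (\<sigma> i)) n = 0) \<and>
      coeff (\<Prod>i=0..<l. E i (\<sigma> i)) (T \<sigma>) = (\<Prod>i=0..<l. coeff (E i (\<sigma> i)) (b i (\<sigma> i)))"
    if s: "\<sigma> \<in> P" for \<sigma>
  proof -
    have sp: "\<sigma> permutes {0..<l}" using s by (simp add: P_def)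
    show ?thesis unfolding T_def
      by (rule prod_coeff_low[where f = "\<lambda>i. E i (\<sigma> i)" and b = "\<lambda>i. b i (\<sigma> i)"])
        (use vanish permutes_in_image[OF sp] in auto)
  qed
  have low: "coeff (Dp x1 x2 lam) n = 0" if n: "n < Nprime lam" for n
  proof -
    have "coeff (Dp x1 x2 lam) n = coeff (monom 1 L * det Mr) (n + L)" by (simp add: DMr coeff_monom_mult)
    also have "\<dots> = (\<Sum>\<sigma>\<in>P. signof \<sigma> * coeff (\<Prod>i=0..<l. E i (\<sigma> i)) (n + L))"
      by (simp add: expand coeff_sum coeff_signof)
    also have "\<dots> = 0"
    proof (rule sum.neutral, intro ballI)
      fix \<sigma> assume s: "\<sigma> \<in> P"
      have "n + L < T \<sigma>" using n NL Tge[OF s] by linarith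
      thus "signof \<sigma> * coeff (\<Prod>i=0..<l. E i (\<sigma> i)) (n + L) = 0" using prodc[OF s] by simp
    qed
    finally show ?thesis .
  qed
  define C where "C = mat l l (\<lambda>(i,j). if j = 0 \<and> i \<noteq> 0 then 0 else coeff (E i j) (b i j))"
  have C: "C \<in> carrier_mat l l" by (simp add: C_def)
  have atN: "coeff (Dp x1 x2 lam) (Nprime lam) = det C"
  proof -
    have "coeff (Dp x1 x2 lam) (Nprime lam) = coeff (monom 1 L * det Mr) (T id)"
      by (simp add: NL DMr coeff_monom_mult)
    also have "\<dots> = (\<Sum>\<sigma>\<in>P. signof \<sigma> * coeff (\<Prod>i=0..<l. E i (\<sigma> i)) (T id))"
      by (simp add: expand coeff_sum coeff_signof)
    also have "\<dots> = (\<Sum>\<sigma>\<in>P. signof \<sigma> * (\<Prod>i=0..<l. C $$ (i, \<sigma> i)))"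
    proof (rule sum.cong[OF refl])
      fix \<sigma> assume s: "\<sigma> \<in> P"
      have sp: "\<sigma> permutes {0..<l}" using s by (simp add: P_def)
      have inl: "\<And>i. i < l \<Longrightarrow> \<sigma> i < l" using permutes_in_image[OF sp] by simp
      show "signof \<sigma> * coeff (\<Prod>i=0..<l. E i (\<sigma> i)) (T id) = signof \<sigma> * (\<Prod>i=0..<l. C $$ (i, \<sigma> i))"
      proof (cases "\<sigma> 0 = 0")
        case True
        have "coeff (\<Prod>i=0..<l. E i (\<sigma> i)) (T id) = (\<Prod>i=0..<l. coeff (E i (\<sigma> i)) (b i (\<sigma> i)))"
          using prodc[OF s] Teq[OF s True] by simp
        also have "\<dots> = (\<Prod>i=0..<l. C $$ (i, \<sigma> i))"
        proof (rule prod.cong[OF refl])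
          fix i assume i: "i \<in> {0..<l}"
          have "\<sigma> i = 0 \<Longrightarrow> i = 0" using permutes_inj[OF sp] True by (metis injD)
          thus "coeff (E i (\<sigma> i)) (b i (\<sigma> i)) = C $$ (i, \<sigma> i)" using i inl by (auto simp: C_def)
        qed
        finally show ?thesis by simp
      next
        case False
        obtain k where k: "k < l" "\<sigma> k = 0" using kex[OF s] by blast
        have k0: "k \<noteq> 0" using k False by metis
        have "coeff (\<Prod>i=0..<l. E i (\<sigma> i)) (T id) = 0" using prodc[OF s] Tgt[OF s False] by simp
        moreover have "(\<Prod>i=0..<l. C $$ (i, \<sigma> i)) = 0"
          by (rule prod_zero) (use k k0 in \<open>auto simp: C_def intro!: bexI[of _ k]\<close>)
        ultimately show ?thesis by simp
      qed
    qed
    also have "\<dots> = det C" unfolding det_def'[OF C] P_def ..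
    finally show ?thesis .
  qed
  have detC: "det C = C $$ (0,0) * det (mat_delete C 0 0)"
  proof -
    have "det C = (\<Sum>i<l. C $$ (i,0) * cofactor C i 0)" by (rule laplace_expansion_column[OF C l1'])
    also have "\<dots> = C $$ (0,0) * cofactor C 0 0 + (\<Sum>i\<in>{..<l}-{0}. C $$ (i,0) * cofactor C i 0)"
      using l1' by (subst sum.remove[of _ 0]) auto
    also have "(\<Sum>i\<in>{..<l}-{0}. C $$ (i,0) * cofactor C i 0) = 0"
      using l1' by (intro sum.neutral) (auto simp: C_def)
    finally show ?thesis by (simp add: cofactor_def)
  qed
  have C00: "C $$ (0,0) = qq x1 x2 (lam!0)"
    using l1' by (simp add: C_def E_def b_def Mr_def m_def coeff_pP)
  have MD: "mat_delete C 0 0 = (-x2) \<cdot>\<^sub>m Gm lam"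
  proof (rule eq_matI)
    show "dim_row (mat_delete C 0 0) = dim_row ((-x2) \<cdot>\<^sub>m Gm lam)"
      "dim_col (mat_delete C 0 0) = dim_col ((-x2) \<cdot>\<^sub>m Gm lam)"
      by (simp_all add: C_def Gm_def l_def)
    fix i j assume "i < dim_row ((-x2) \<cdot>\<^sub>m Gm lam)" "j < dim_col ((-x2) \<cdot>\<^sub>m Gm lam)"
    hence i: "Suc i < l" and j: "Suc j < l" by (auto simp: Gm_def l_def)
    define k where "k = int (lam!(Suc i)) - int i + int j"
    have lhs: "mat_delete C 0 0 $$ (i,j) = coeff (monom 1 (Suc i) * rP x2 k) (lam!(Suc i) + j)"
      using i j by (simp add: mat_delete_def C_def E_def b_def Mr_def m_def k_def algebra_simps)
    have rhs: "((-x2) \<cdot>\<^sub>m Gm lam) $$ (i,j) = -x2 * gg (k - 1)"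
      using i j by (simp add: Gm_def l_def k_def algebra_simps)
    show "mat_delete C 0 0 $$ (i,j) = ((-x2) \<cdot>\<^sub>m Gm lam) $$ (i,j)"
    proof (cases "1 \<le> k")
      case True
      have e: "lam!(Suc i) + j - Suc i = nat (k - 1)" using True by (simp add: k_def)
      have "\<not> lam!(Suc i) + j < Suc i" using True by (simp add: k_def)
      then show ?thesis unfolding lhs rhs coeff_monom_mult using True
        by (simp add: e coeff_rP_at gg_def)
    next
      case False
      have "lam!(Suc i) + j < Suc i" using False by (simp add: k_def)
      then show ?thesis unfolding lhs rhs coeff_monom_mult using False by (simp add: gg_def)
    qed
  qed
  have "coeff (Dp x1 x2 lam) (Nprime lam) = qq x1 x2 (lam!0) * (-x2)^(length lam - 1) * det (Gm lam)"
    unfolding atN detC C00 MD by (simp add: Gm_def l_def)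
  with low show ?thesis by blast
qed




lemma det_rowscale:
  fixes d :: "nat \<Rightarrow> 'a::comm_ring_1"
  shows "det (mat n n (\<lambda>(i,j). d i * A i j)) = (\<Prod>i<n. d i) * det (mat n n (\<lambda>(i,j). A i j))"
proof -
  have "det (mat n n (\<lambda>(i,j). d i * A i j))
      = (\<Sum>p\<in>{p. p permutes {0..<n}}. signof p * ((\<Prod>i=0..<n. d i) * (\<Prod>i=0..<n. A i (p i))))"
    unfolding det_def'[of _ n, OF mat_carrier]
    by (intro sum.cong refl) (auto simp: prod.distrib permutes_in_image intro!: arg_cong2[where f="(*)"] prod.cong)
  also have "\<dots> = (\<Prod>i=0..<n. d i) * det (mat n n (\<lambda>(i,j). A i j))"
    unfolding det_def'[of _ n, OF mat_carrier] sum_distrib_left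
    by (intro sum.cong refl) (auto simp: permutes_in_image algebra_simps intro!: prod.cong)
  finally show ?thesis by (simp add: atLeast0LessThan)
qed

lemma det_reverse:
  fixes A :: "'a::comm_ring_1 mat"
  assumes A: "A \<in> carrier_mat n n"
  shows "det (mat n n (\<lambda>(i,j). A $$ (n - 1 - i, n - 1 - j))) = det A"
proof -
  define r where "r = (\<lambda>i. if i < n then n - 1 - i else i)"
  have r: "r permutes {0..<n}"
  proof (rule bij_imp_permutes)
    show "bij_betw r {0..<n} {0..<n}"
    proof (rule bij_betw_imageI)
      show "inj_on r {0..<n}" by (auto simp: r_def inj_on_def)
      show "r ` {0..<n} = {0..<n}"
      proof
        show "r ` {0..<n} \<subseteq> {0..<n}" by (auto simp: r_def)
        show "{0..<n} \<subseteq> r ` {0..<n}"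
        proof
          fix x assume x: "x \<in> {0..<n}"
          hence "r (n - 1 - x) = x" "n - 1 - x \<in> {0..<n}" by (auto simp: r_def)
          thus "x \<in> r ` {0..<n}" by (metis image_eqI)
        qed
      qed
    qed
  qed (auto simp: r_def)
  define B1 where "B1 = mat n n (\<lambda>(i,j). A $$ (r i, j))"
  have B1: "B1 \<in> carrier_mat n n" by (simp add: B1_def)
  have d1: "det B1 = signof r * det A" unfolding B1_def by (rule det_permute_rows[OF A r])
  define B2 where "B2 = mat n n (\<lambda>(i,j). transpose_mat B1 $$ (r i, j))"
  have d2: "det B2 = signof r * det (transpose_mat B1)"
    unfolding B2_def by (rule det_permute_rows[OF _ r]) (use B1 in simp)
  have "mat n n (\<lambda>(i,j). A $$ (n - 1 - i, n - 1 - j)) = transpose_mat B2"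
    by (rule eq_matI) (auto simp: B2_def B1_def r_def)
  hence "det (mat n n (\<lambda>(i,j). A $$ (n - 1 - i, n - 1 - j))) = det B2"
    using det_transpose[of B2 n] by (simp add: B2_def)
  also have "\<dots> = signof r * signof r * det A" using d2 det_transpose[OF B1] d1 by simp
  also have "signof r * signof r = (1::'a)" by (cases r rule: sign_cases) auto
  finally show ?thesis by simp
qed


lemma vandermonde:
  fixes y :: "nat \<Rightarrow> 'a::comm_ring_1"
  shows "det (mat n n (\<lambda>(i,j). y i ^ j)) = (\<Prod>i<n. \<Prod>j=Suc i..<n. (y j - y i))"
proof (induction n arbitrary: y)
  case 0 then show ?case by simp
next
  case (Suc n)
  define V' where "V' = mat (Suc n) (Suc n) (\<lambda>(i,j). if j = 0 then 1 else y i ^ (j - 1) * (y i - y 0))"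
  have V': "V' \<in> carrier_mat (Suc n) (Suc n)" by (simp add: V'_def)
  have "det (mat (Suc n) (Suc n) (\<lambda>(i,j). y i ^ j)) = det V'"
  proof (rule det_colop[where c = "y 0"])
    fix i j assume "i < Suc n" "0 < j" "j < Suc n"
    then show "V' $$ (i, j) = mat (Suc n) (Suc n) (\<lambda>(i,j). y i ^ j) $$ (i, j) - y 0 * mat (Suc n) (Suc n) (\<lambda>(i,j). y i ^ j) $$ (i, j - 1)"
      by (cases j) (auto simp: V'_def algebra_simps)
  qed (auto simp: V'_def)
  also have "det V' = (\<Sum>j<Suc n. V' $$ (0,j) * cofactor V' 0 j)"
    by (rule laplace_expansion_row[OF V']) simp
  also have "\<dots> = cofactor V' 0 0"
    by (subst sum.lessThan_Suc_shift) (simp add: V'_def)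
  also have "\<dots> = det (mat n n (\<lambda>(i,j). (y (Suc i) - y 0) * y (Suc i) ^ j))"
  proof -
    have "mat_delete V' 0 0 = mat n n (\<lambda>(i,j). (y (Suc i) - y 0) * y (Suc i) ^ j)"
      by (rule eq_matI) (auto simp: mat_delete_def V'_def algebra_simps)
    thus ?thesis by (simp add: cofactor_def)
  qed
  also have "\<dots> = (\<Prod>i<n. y (Suc i) - y 0) * (\<Prod>i<n. \<Prod>j=Suc i..<n. (y (Suc j) - y (Suc i)))"
    using det_rowscale[of n "\<lambda>i. y (Suc i) - y 0" "\<lambda>i j. y (Suc i) ^ j"] Suc.IH[of "\<lambda>i. y (Suc i)"]
    by simp
  also have "\<dots> = (\<Prod>i<Suc n. \<Prod>j=Suc i..<Suc n. (y j - y i))"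
  proof -
    have a: "(\<Prod>j=Suc 0..<Suc n. (y j - y 0)) = (\<Prod>i<n. y (Suc i) - y 0)"
      by (subst prod.shift_bounds_Suc_ivl) (simp add: atLeast0LessThan)
    have b: "(\<Prod>j=Suc (Suc i)..<Suc n. (y j - y (Suc i))) = (\<Prod>j=Suc i..<n. (y (Suc j) - y (Suc i)))" for i
      by (subst prod.shift_bounds_Suc_ivl) simp
    show ?thesis by (subst prod.lessThan_Suc_shift) (simp only: a b)
  qed
  finally show ?case .
qed

lemma det_monic:
  fixes p :: "nat \<Rightarrow> 'a::comm_ring_1 poly"
  assumes "\<And>j. j < n \<Longrightarrow> degree (p j) \<le> j" "\<And>j. j < n \<Longrightarrow> coeff (p j) j = 1"
  shows "det (mat n n (\<lambda>(i,j). poly (p j) (y i))) = det (mat n n (\<lambda>(i,j). y i ^ j))"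
proof -
  define V where "V = mat n n (\<lambda>(i,j). y i ^ j)"
  define T where "T = mat n n (\<lambda>(d,j). coeff (p j) d)"
  have V: "V \<in> carrier_mat n n" and T: "T \<in> carrier_mat n n" by (auto simp: V_def T_def)
  have "mat n n (\<lambda>(i,j). poly (p j) (y i)) = V * T"
  proof (rule eq_matI)
    fix i j assume "i < dim_row (V * T)" "j < dim_col (V * T)"
    hence i: "i < n" and j: "j < n" by (auto simp: V_def T_def)
    have "(V * T) $$ (i,j) = (\<Sum>d\<in>{0..<n}. y i ^ d * coeff (p j) d)"
      using i j by (simp add: V_def T_def scalar_prod_def)
    also have "\<dots> = (\<Sum>d\<le>degree (p j). coeff (p j) d * y i ^ d)"
    proof (rule sum.mono_neutral_cong_right)
      show "{..degree (p j)} \<subseteq> {0..<n}" using assms(1)[OF j] j by auto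
    qed (auto simp: coeff_eq_0)
    also have "\<dots> = poly (p j) (y i)" by (simp add: poly_altdef)
    finally show "mat n n (\<lambda>(i,j). poly (p j) (y i)) $$ (i,j) = (V * T) $$ (i,j)" using i j by simp
  qed (auto simp: V_def T_def)
  hence "det (mat n n (\<lambda>(i,j). poly (p j) (y i))) = det V * det T" using det_mult[OF V T] by simp
  moreover have "det T = 1"
  proof -
    have "det T = prod_list (diag_mat T)"
    proof (rule det_upper_triangular[OF _ T])
      show "upper_triangular T" unfolding upper_triangular_def
      proof (intro allI impI)
        fix i j assume "i < dim_row T" "j < i"
        thus "T $$ (i,j) = 0" using assms(1)[of j] by (auto simp: T_def coeff_eq_0)
      qed
    qed
    also have "\<dots> = 1" by (simp add: prod_list_diag_prod T_def assms(2))
    finally show ?thesis .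
  qed
  ultimately show ?thesis by (simp add: V_def)
qed

definition ffp :: "nat \<Rightarrow> real poly" where "ffp j = (\<Prod>k<j. [:- real k, 1:])"

lemma ffp_props: "degree (ffp j) = j \<and> coeff (ffp j) j = 1"
proof (induction j)
  case 0 then show ?case by (simp add: ffp_def)
next
  case (Suc j)
  have e: "ffp (Suc j) = ffp j * [:- real j, 1:]" by (simp add: ffp_def)
  have nz: "ffp j \<noteq> 0" using Suc by auto
  have "degree (ffp j * [:- real j, 1:]) = degree (ffp j) + degree [:- real j, 1:]"
    by (rule degree_mult_eq) (use nz in auto)
  hence "degree (ffp (Suc j)) = Suc j" unfolding e using Suc by simp
  moreover have "lead_coeff (ffp j * [:- real j, 1:]) = lead_coeff (ffp j) * lead_coeff [:- real j, 1:]"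
    by (rule lead_coeff_mult)
  hence "lead_coeff (ffp (Suc j)) = 1" unfolding e using Suc by simp
  ultimately show ?case by simp
qed

lemma poly_ffp: "poly (ffp j) x = (\<Prod>k<j. (x - real k))"
  by (simp add: ffp_def poly_prod)

lemma ffact_fact: "j \<le> y \<Longrightarrow> (\<Prod>k<j. (real y - real k)) * fact (y - j) = fact y"
proof (induction j)
  case 0 then show ?case by simp
next
  case (Suc j)
  have e: "y - j = Suc (y - Suc j)" using Suc by auto
  have "(\<Prod>k<Suc j. (real y - real k)) * fact (y - Suc j) = (\<Prod>k<j. (real y - real k)) * ((real y - real j) * fact (y - Suc j))"
    by (simp add: algebra_simps)
  also have "(real y - real j) * fact (y - Suc j) = (fact (y - j) :: real)"
    unfolding e using Suc by (simp add: of_nat_diff)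
  finally show ?case using Suc by simp
qed

lemma gg_ffp: "gg (int y - int j) = poly (ffp j) (real y) / fact y"
proof (cases "j \<le> y")
  case True
  have "gg (int y - int j) = 1 / fact (y - j)" using True by (simp add: gg_def nat_diff_distrib)
  also have "\<dots> = poly (ffp j) (real y) / fact y"
    using ffact_fact[OF True] by (simp add: poly_ffp field_simps)
  finally show ?thesis .
next
  case False
  have "poly (ffp j) (real y) = 0" unfolding poly_ffp
    by (rule prod_zero) (use False in \<open>auto intro!: bexI[of _ y]\<close>)
  thus ?thesis using False by (simp add: gg_def)
qed


lemma clam_det:
  assumes part: "is_partition lam" and l1: "length lam \<ge> 1"
  shows "fact (Nprime lam) * det (Gm lam) = clam lam"
proof -
  define l where "l = length lam"
  define n where "n = l - 1"
  have ln: "l = Suc n" using l1 by (simp add: l_def n_def)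
  have pos: "\<And>i. i < l \<Longrightarrow> 1 \<le> lam!i" using partition_pos[OF part] by (simp add: l_def)
  define y where "y = (\<lambda>i. wt lam (Suc i) - 1)"
  have wty: "wt lam (Suc i) = lam!(n - i) + i" if "i < n" for i
    using that by (simp add: wt_def l_def[symmetric] ln)
  have yi: "y i = lam!(n - i) + i - 1" if "i < n" for i
    using wty[OF that] by (simp add: y_def)
  have wtr: "real (wt lam (Suc i)) = real (y i) + 1" if "i < n" for i
  proof -
    have "1 \<le> lam!(n - i)" using pos[of "n - i"] ln by simp
    thus ?thesis using wty[OF that] by (simp add: y_def of_nat_diff)
  qed
  have G: "Gm lam \<in> carrier_mat n n" by (simp add: Gm_def l_def[symmetric] n_def)
  have "det (Gm lam) = det (mat n n (\<lambda>(i,j). Gm lam $$ (n - 1 - i, n - 1 - j)))"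
    by (rule det_reverse[OF G, symmetric])
  also have "\<dots> = det (mat n n (\<lambda>(i,j). (1 / fact (y i)) * poly (ffp j) (real (y i))))"
  proof (intro arg_cong[where f=det] eq_matI)
    fix i j assume "i < dim_row (mat n n (\<lambda>(i,j). (1 / fact (y i)) * poly (ffp j) (real (y i))))"
      "j < dim_col (mat n n (\<lambda>(i,j). (1 / fact (y i)) * poly (ffp j) (real (y i))))"
    hence i: "i < n" and j: "j < n" by auto
    have p: "1 \<le> lam!(n - i)" using pos[of "n - i"] ln by simp
    have e: "int (lam ! Suc (n - 1 - i)) - 1 - int (n - 1 - i) + int (n - 1 - j) = int (y i) - int j"
    proof -
      have "Suc (n - 1 - i) = n - i" using i by simp
      thus ?thesis using i j p by (simp add: yi of_nat_diff)
    qed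
    have Gdef: "Gm lam $$ (a,b) = gg (int (lam!(Suc a)) - 1 - int a + int b)" if "a < n" "b < n" for a b
      using that by (simp add: Gm_def l_def[symmetric] n_def)
    have "Gm lam $$ (n - 1 - i, n - 1 - j) = gg (int (y i) - int j)"
      using Gdef[of "n - 1 - i" "n - 1 - j"] i j e by (simp del: of_nat_diff)
    thus "mat n n (\<lambda>(i,j). Gm lam $$ (n - 1 - i, n - 1 - j)) $$ (i,j) =
        mat n n (\<lambda>(i,j). (1 / fact (y i)) * poly (ffp j) (real (y i))) $$ (i,j)"
      using i j by (simp add: gg_ffp)
  qed simp_all
  also have "\<dots> = (\<Prod>i<n. 1 / fact (y i)) * det (mat n n (\<lambda>(i,j). poly (ffp j) (real (y i))))"
    by (rule det_rowscale)
  also have "det (mat n n (\<lambda>(i,j). poly (ffp j) (real (y i)))) = det (mat n n (\<lambda>(i,j). real (y i) ^ j))"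
    by (rule det_monic) (simp_all add: ffp_props)
  also have "\<dots> = (\<Prod>i<n. \<Prod>j=Suc i..<n. (real (y j) - real (y i)))"
    by (rule vandermonde)
  finally have dG: "det (Gm lam) = (\<Prod>i<n. 1 / fact (y i)) * (\<Prod>i<n. \<Prod>j=Suc i..<n. (real (y j) - real (y i)))" .
  have c1: "(\<Prod>i\<in>{1..length lam - 1}. fact (wt lam i - 1)) = (\<Prod>i<n. (fact (y i) :: real))"
  proof -
    have "(\<Prod>i\<in>{1..length lam - 1}. (fact (wt lam i - 1) :: real)) = (\<Prod>i\<in>{Suc 0..<Suc n}. fact (wt lam i - 1))"
      by (simp add: l_def[symmetric] n_def atLeastLessThanSuc_atLeastAtMost)
    also have "\<dots> = (\<Prod>i<n. fact (y i))"
      by (subst prod.shift_bounds_Suc_ivl) (simp add: y_def atLeast0LessThan)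
    finally show ?thesis .
  qed
  have c2: "(\<Prod>i\<in>{1..length lam - 1}. \<Prod>j\<in>{i<..length lam - 1}. (real (wt lam j) - real (wt lam i)))
      = (\<Prod>i<n. \<Prod>j=Suc i..<n. (real (y j) - real (y i)))"
  proof -
    have "(\<Prod>i\<in>{1..length lam - 1}. \<Prod>j\<in>{i<..length lam - 1}. (real (wt lam j) - real (wt lam i)))
      = (\<Prod>i\<in>{Suc 0..<Suc n}. \<Prod>j\<in>{Suc i..<Suc n}. (real (wt lam j) - real (wt lam i)))"
      by (simp add: l_def[symmetric] n_def atLeastLessThanSuc_atLeastAtMost atLeastSucAtMost_greaterThanAtMost)
    also have "\<dots> = (\<Prod>i<n. \<Prod>j\<in>{Suc (Suc i)..<Suc n}. (real (wt lam j) - real (wt lam (Suc i))))"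
      by (subst prod.shift_bounds_Suc_ivl) (simp add: atLeast0LessThan)
    also have "\<dots> = (\<Prod>i<n. \<Prod>j=Suc i..<n. (real (wt lam (Suc j)) - real (wt lam (Suc i))))"
      by (subst prod.shift_bounds_Suc_ivl) simp
    also have "\<dots> = (\<Prod>i<n. \<Prod>j=Suc i..<n. (real (y j) - real (y i)))"
      by (intro prod.cong refl) (simp add: wtr)
    finally show ?thesis .
  qed
  show ?thesis unfolding clam_def c1 c2 dG
    by (simp add: prod_dividef)
qed


lemma hook_partition: "1 \<le> m \<Longrightarrow> is_partition (hook m r)"
  by (auto simp: is_partition_def hook_def sorted_wrt_iff_nth_less nth_Cons')

lemma hook_length: "1 \<le> r \<Longrightarrow> length (hook m r) = r"
  by (simp add: hook_def)

lemma hook_Nprime: "1 \<le> r \<Longrightarrow> Nprime (hook m r) = 0"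
proof -
  assume r: "1 \<le> r"
  have "(\<Sum>i\<in>{1..<r}. hook m r ! i) = (\<Sum>i\<in>{1..<r}. 1)"
    by (intro sum.cong refl) (auto simp: hook_def nth_Cons')
  thus ?thesis using r by (simp add: Nprime_def hook_length)
qed

lemma Gm_hook: "1 \<le> r \<Longrightarrow> det (Gm (hook m r)) = 1"
proof -
  assume r: "1 \<le> r"
  define G where "G = Gm (hook m r)"
  have G: "G \<in> carrier_mat (r - 1) (r - 1)" by (simp add: G_def Gm_def hook_length[OF r])
  have ent: "G $$ (i,j) = gg (int j - int i)" if "i < r - 1" "j < r - 1" for i j
    using that r by (simp add: G_def Gm_def hook_length hook_def)
  have "det G = prod_list (diag_mat G)"
  proof (rule det_upper_triangular[OF _ G])
    show "upper_triangular G" unfolding upper_triangular_def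
      using G ent by (auto simp: gg_def)
  qed
  also have "\<dots> = 1" using G by (simp add: prod_list_diag_prod ent gg_def)
  finally show ?thesis by (simp add: G_def)
qed

lemma hook_schur: "1 \<le> m \<Longrightarrow> 1 \<le> r \<Longrightarrow> schur (hook m r) (brk x1 x2) = qq x1 x2 m * (-x2)^(r-1)"
proof -
  assume m: "1 \<le> m" and r: "1 \<le> r"
  have "schur (hook m r) (brk x1 x2) = coeff (Dp x1 x2 (hook m r)) 0" by (rule schur_brk)
  also have "\<dots> = qq x1 x2 (hook m r ! 0) * (-x2)^(length (hook m r) - 1) * det (Gm (hook m r))"
    using main_coeff[OF hook_partition[OF m, of r], of x1 x2] hook_Nprime[OF r] hook_length[OF r] r by simp
  also have "\<dots> = qq x1 x2 m * (-x2)^(r-1)" using Gm_hook[OF r] hook_length[OF r] by (simp add: hook_def)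
  finally show ?thesis .
qed


lemma det_unitri: "det (mat k k (\<lambda>(i,j). gg (int j - int i))) = 1"
proof -
  define U where "U = mat k k (\<lambda>(i,j). gg (int j - int i))"
  have U: "U \<in> carrier_mat k k" by (simp add: U_def)
  have "det U = prod_list (diag_mat U)"
    by (rule det_upper_triangular[OF _ U]) (auto simp: upper_triangular_def U_def gg_def)
  also have "\<dots> = 1" by (simp add: prod_list_diag_prod U_def gg_def)
  finally show ?thesis by (simp add: U_def)
qed

lemma Gm_ext:
  assumes lamlen: "length lam \<ge> 1" and len: "length mu \<ge> length lam"
    and same: "\<forall>i. 1 \<le> i \<and> i < length lam \<longrightarrow> mu!i = lam!i"
    and ones: "\<forall>i. length lam \<le> i \<and> i < length mu \<longrightarrow> mu!i = 1"
  shows "det (Gm mu) = det (Gm lam)"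
proof -
  define n where "n = length lam - 1"
  define k where "k = length mu - length lam"
  have lmu: "length mu - 1 = n + k" using lamlen len by (simp add: n_def k_def)
  define U where "U = mat k k (\<lambda>(i,j). gg (int j - int i))"
  define B where "B = mat n k (\<lambda>(i,j). Gm mu $$ (i, n + j))"
  have G: "Gm lam \<in> carrier_mat n n" by (simp add: Gm_def n_def)
  have "Gm mu = four_block_mat (Gm lam) B (0\<^sub>m k n) U"
  proof (rule eq_matI)
    show "dim_row (Gm mu) = dim_row (four_block_mat (Gm lam) B (0\<^sub>m k n) U)"
      "dim_col (Gm mu) = dim_col (four_block_mat (Gm lam) B (0\<^sub>m k n) U)"
      using lmu by (simp_all add: Gm_def n_def U_def B_def)
    fix i j assume "i < dim_row (four_block_mat (Gm lam) B (0\<^sub>m k n) U)"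
      "j < dim_col (four_block_mat (Gm lam) B (0\<^sub>m k n) U)"
    hence i: "i < n + k" and j: "j < n + k" by (auto simp: Gm_def n_def U_def B_def)
    have gmu: "Gm mu $$ (i,j) = gg (int (mu!(Suc i)) - 1 - int i + int j)"
      using i j lmu by (simp add: Gm_def)
    show "Gm mu $$ (i,j) = four_block_mat (Gm lam) B (0\<^sub>m k n) U $$ (i,j)"
    proof (cases "i < n")
      case True
      have "mu!(Suc i) = lam!(Suc i)" using same True by (simp add: n_def)
      thus ?thesis using True i j gmu G by (auto simp: Gm_def n_def B_def U_def)
    next
      case False
      have "length lam \<le> Suc i" "Suc i < length mu" using False i lamlen len by (auto simp: n_def k_def)
      hence "mu!(Suc i) = 1" using ones by blast
      thus ?thesis using False i j gmu G by (auto simp: Gm_def n_def B_def U_def gg_def)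
    qed
  qed
  moreover have "det (four_block_mat (Gm lam) B (0\<^sub>m k n) U) = det (Gm lam) * det U"
    by (rule det_four_block_mat_lower_left_zero[OF G _ refl]) (simp_all add: B_def U_def)
  ultimately have "det (Gm mu) = det (Gm lam) * det U" by simp
  thus ?thesis by (simp add: U_def det_unitri)
qed





theorem theorem2p4:
  fixes lam :: "nat list"
  assumes "is_partition lam" and "length lam \<ge> 1"
  shows "(\<forall>m x1 x2. m < Nprime lam \<longrightarrow> d1 m (schur lam) (brk x1 x2) = 0)
    \<and> (\<forall>x1 x2. d1 (Nprime lam) (schur lam) (brk x1 x2)
          = clam lam * schur (hook (lam ! 0) (length lam)) (brk x1 x2))
    \<and> (\<forall>mu. is_partition mu \<and> length mu \<ge> length lam
          \<and> (\<forall>i. 1 \<le> i \<and> i < length lam \<longrightarrow> mu ! i = lam ! i)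
          \<and> (\<forall>i. length lam \<le> i \<and> i < length mu \<longrightarrow> mu ! i = 1)
          \<longrightarrow> (\<forall>x1 x2. d1 (Nprime lam) (schur mu) (brk x1 x2)
                = clam lam * schur (hook (mu ! 0) (length mu)) (brk x1 x2)))
    \<and> (\<forall>m r x1 x2. 1 \<le> m \<and> 1 \<le> r \<longrightarrow>
          schur (hook m r) (brk x1 x2) = (-1) ^ (r - 1) * x1 ^ (m - 1) * x2 ^ (r - 1) * (x1 - x2))"
proof (intro conjI allI impI)
  fix m x1 x2 assume "m < Nprime lam"
  then show "d1 m (schur lam) (brk x1 x2) = 0"
    using main_coeff[OF assms, of x1 x2] by (simp add: d1_Dp)
next
  fix x1 x2
  have l0: "1 \<le> lam ! 0" using partition_pos[OF assms(1), of 0] assms(2) by (simp add: Suc_le_eq)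
  have "d1 (Nprime lam) (schur lam) (brk x1 x2) = fact (Nprime lam) * (qq x1 x2 (lam!0) * (-x2)^(length lam - 1) * det (Gm lam))"
    using main_coeff[OF assms, of x1 x2] by (simp add: d1_Dp)
  also have "\<dots> = clam lam * (qq x1 x2 (lam!0) * (-x2)^(length lam - 1))"
    using clam_det[OF assms] by (simp add: algebra_simps)
  also have "\<dots> = clam lam * schur (hook (lam ! 0) (length lam)) (brk x1 x2)"
    using hook_schur[OF l0 assms(2)] by simp
  finally show "d1 (Nprime lam) (schur lam) (brk x1 x2) = clam lam * schur (hook (lam ! 0) (length lam)) (brk x1 x2)" .
next
  fix mu x1 x2
  assume H: "is_partition mu \<and> length mu \<ge> length lam
          \<and> (\<forall>i. 1 \<le> i \<and> i < length lam \<longrightarrow> mu ! i = lam ! i)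
          \<and> (\<forall>i. length lam \<le> i \<and> i < length mu \<longrightarrow> mu ! i = 1)"
  then have pm: "is_partition mu" and len: "length mu \<ge> length lam"
    and same: "\<forall>i. 1 \<le> i \<and> i < length lam \<longrightarrow> mu ! i = lam ! i"
    and ones: "\<forall>i. length lam \<le> i \<and> i < length mu \<longrightarrow> mu ! i = 1" by auto
  have lm: "length mu \<ge> 1" using len assms(2) by simp
  have m0: "1 \<le> mu ! 0" using partition_pos[OF pm, of 0] lm by (simp add: Suc_le_eq)
  have NN: "Nprime mu = Nprime lam"
  proof -
    have split: "{1..<length mu} = {1..<length lam} \<union> {length lam..<length mu}" using len assms(2) by auto
    have "(\<Sum>i\<in>{1..<length mu}. mu!i) = (\<Sum>i\<in>{1..<length lam}. mu!i) + (\<Sum>i\<in>{length lam..<length mu}. mu!i)"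
      unfolding split by (rule sum.union_disjoint) auto
    also have "(\<Sum>i\<in>{1..<length lam}. mu!i) = (\<Sum>i\<in>{1..<length lam}. lam!i)"
      using same by (intro sum.cong) auto
    also have "(\<Sum>i\<in>{length lam..<length mu}. mu!i) = (\<Sum>i\<in>{length lam..<length mu}. 1)"
      using ones by (intro sum.cong) auto
    finally have "(\<Sum>i\<in>{1..<length mu}. mu!i) = (\<Sum>i\<in>{1..<length lam}. lam!i) + (length mu - length lam)"
      by simp
    moreover have "length lam - 1 \<le> (\<Sum>i\<in>{1..<length lam}. lam!i)"
    proof -
      have "(\<Sum>i\<in>{1..<length lam}. (1::nat)) \<le> (\<Sum>i\<in>{1..<length lam}. lam!i)"
        by (rule sum_mono) (use partition_pos[OF assms(1)] in auto)
      thus ?thesis by simp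
    qed
    ultimately show ?thesis unfolding Nprime_def using len assms(2) by linarith
  qed
  have "d1 (Nprime lam) (schur mu) (brk x1 x2) = fact (Nprime lam) * (qq x1 x2 (mu!0) * (-x2)^(length mu - 1) * det (Gm mu))"
    using main_coeff[OF pm lm, of x1 x2] NN by (simp add: d1_Dp)
  also have "det (Gm mu) = det (Gm lam)" by (rule Gm_ext[OF assms(2) len same ones])
  also have "fact (Nprime lam) * (qq x1 x2 (mu!0) * (-x2)^(length mu - 1) * det (Gm lam))
      = clam lam * (qq x1 x2 (mu!0) * (-x2)^(length mu - 1))"
    using clam_det[OF assms] by (simp add: algebra_simps)
  also have "\<dots> = clam lam * schur (hook (mu ! 0) (length mu)) (brk x1 x2)"
    using hook_schur[OF m0 lm] by simp
  finally show "d1 (Nprime lam) (schur mu) (brk x1 x2) = clam lam * schur (hook (mu ! 0) (length mu)) (brk x1 x2)" .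
next
  fix m r :: nat and x1 x2 :: real
  assume "1 \<le> m \<and> 1 \<le> r"
  then have m: "1 \<le> m" and r: "1 \<le> r" by auto
  have "schur (hook m r) (brk x1 x2) = qq x1 x2 m * (-x2)^(r-1)" by (rule hook_schur[OF m r])
  also have "\<dots> = (-1) ^ (r - 1) * x1 ^ (m - 1) * x2 ^ (r - 1) * (x1 - x2)"
  proof -
    have "m \<noteq> 0" using m by simp
    thus ?thesis unfolding qq_def power_minus[of x2] by (simp add: mult_ac)
  qed
  finally show "schur (hook m r) (brk x1 x2) = (-1) ^ (r - 1) * x1 ^ (m - 1) * x2 ^ (r - 1) * (x1 - x2)" .
qed


end
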